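(* Let $S$ be a reflective numerical semigroup with $\mathrm{g}(S)\ge1$. Then \[ \mathrm{e}(S)\ \ge\ \frac{\mathrm{F}(S)+1}{\mathrm{F}(S)+1-\mathrm{g}(S)}, \] where $\mathrm{e}(S)$ denotes the embedding dimension of $S$.
   Context: A numerical semigroup is a submonoid $S$ of $(\mathbb{N}_0,+)$ with finite complement; $\mathrm{g}(S)$ is the number of its gaps (elements of $\mathbb{N}_0\setminus S$), $\mathrm{F}(S)$ is its largest gap, and $\mathrm{e}(S)$ is the cardinality of its minimal generating set. A numerical semigroup $S$ of genus $g\ge1$ is called reflective if for every $z\in\{0,1,\dots,g-1\}$ exactly one of $z$ and $z+g$ belongs to $S$. *)

theory Defs
  imports Complex_Main
begin

definition numerical_semigroup :: "nat set \<Rightarrow> bool" where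
  "numerical_semigroup S \<longleftrightarrow> 0 \<in> S \<and> (\<forall>x\<in>S. \<forall>y\<in>S. x + y \<in> S) \<and> finite (UNIV - S)"

definition gaps :: "nat set \<Rightarrow> nat set" where
  "gaps S = UNIV - S"

definition genus :: "nat set \<Rightarrow> nat" where
  "genus S = card (gaps S)"

text \<open>Frobenius number: the largest gap (meaningful when genus is at least 1).\<close>
definition frobenius :: "nat set \<Rightarrow> nat" where
  "frobenius S = Max (gaps S)"

definition minimal_generators :: "nat set \<Rightarrow> nat set" where
  "minimal_generators S = {x \<in> S. x \<noteq> 0 \<and> \<not> (\<exists>a\<in>S. \<exists>b\<in>S. a \<noteq> 0 \<and> b \<noteq> 0 \<and> x = a + b)}"

definition embedding_dimension :: "nat set \<Rightarrow> nat" where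
  "embedding_dimension S = card (minimal_generators S)"

definition reflective :: "nat set \<Rightarrow> bool" where
  "reflective S \<longleftrightarrow> genus S \<ge> 1 \<and>
     (\<forall>z < genus S. (z \<in> S) \<noteq> (z + genus S \<in> S))"

end

theory Submission imports Defs "HOL-Number_Theory.Cong" begin

lemma rep:
  fixes p q x :: nat
  assumes cop: "coprime p q" and pp: "p>0" and qp: "q>0"
  shows "(\<exists>i j. x = i*p + j*q) \<or> (\<exists>i j. x + i*p + j*q + p + q = p*q)"
proof -
  obtain u where u: "[p*u = 1] (mod q)" using cong_solve_coprime_nat[OF cop] by auto
  define i where "i = (u*x) mod q"
  have iq: "i < q" using qp i_def by simp
  have "[i*p = u*x*p] (mod q)" unfolding i_def by (simp add: cong_def mod_mult_left_eq)
  moreover have "[u*x*p = x] (mod q)"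
  proof -
    have "[u*x*p = (p*u)*x] (mod q)" by (simp add: mult_ac)
    moreover have "[(p*u)*x = 1*x] (mod q)" using u cong_mult cong_refl by blast
    ultimately show ?thesis by (metis cong_trans mult_1)
  qed
  ultimately have c: "[i*p = x] (mod q)" using cong_trans by blast
  show ?thesis
  proof (cases "i*p \<le> x")
    case True
    then have "q dvd x - i*p" using c cong_altdef_nat cong_sym by blast
    then obtain j where "x - i*p = q*j" by blast
    then have "x = i*p + q*j" using True by linarith
    then show ?thesis by (metis mult.commute)
  next
    case False
    then have "q dvd i*p - x" using c cong_altdef_nat by simp
    then obtain k where k: "i*p - x = q*k" by blast
    then have kp: "k > 0" using False by (cases k) auto
    obtain t where t: "q = i + 1 + t" using iq by (metis add.commute add_Suc_right less_iff_Suc_add plus_1_eq_Suc)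
    obtain k' where k': "k = k' + 1" using kp by (metis Suc_pred add.commute plus_1_eq_Suc)
    have qk: "q*k = q*k' + q" using k' by simp
    have ip: "i*p = x + q*k' + q" using k qk False by linarith
    have "x + t*p + k'*q + p + q = p*q"
    proof -
      have "p*q = i*p + p + t*p" using t by (simp add: algebra_simps)
      moreover have "q*k' = k'*q" by simp
      ultimately show ?thesis using ip by linarith
    qed
    then show ?thesis by blast
  qed
qed

lemma norep:
  fixes p q i j :: nat
  assumes cop: "coprime p q" and pp: "p>0" and qp: "q>0"
  shows "i*p + j*q + p + q \<noteq> p*q"
proof
  assume h: "i*p + j*q + p + q = p*q"
  then have "(i+1)*p + (j+1)*q = q*p" by (simp add: algebra_simps)
  then have "q dvd (i+1)*p" by (metis dvd_add_times_triv_right_iff dvd_triv_left)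
  then have "q dvd i+1" using cop by (metis coprime_commute coprime_dvd_mult_left_iff)
  then have "q \<le> i+1" by (simp add: dvd_imp_le)
  then have "q*p \<le> (i+1)*p" using mult_le_mono1 by blast
  moreover have "(i+1)*p + (j+1)*q = p*q" using h by (simp add: algebra_simps)
  ultimately show False using qp by (simp add: mult.commute)
qed

lemma mult_in:
  assumes "numerical_semigroup S" "p \<in> S"
  shows "k*p \<in> S"
  using assms by (induction k) (auto simp: numerical_semigroup_def)

lemma gen:
  assumes ns: "numerical_semigroup S" and E: "minimal_generators S \<subseteq> {p,q}"
  shows "x \<in> S \<Longrightarrow> \<exists>i j. x = i*p + j*q"
proof (induction x rule: less_induct)
  case (less x)
  show ?case
  proof (cases "x = 0")
    case True
    then show ?thesis by (rule_tac x=0 in exI, rule_tac x=0 in exI) simp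
  next
    case False
    show ?thesis
    proof (cases "x \<in> minimal_generators S")
      case True
      then have "x = p \<or> x = q" using E by auto
      then show ?thesis
      proof
        assume "x = p" then show ?thesis by (rule_tac x=1 in exI, rule_tac x=0 in exI) simp
      next
        assume "x = q" then show ?thesis by (rule_tac x=0 in exI, rule_tac x=1 in exI) simp
      qed
    next
      case nm: False
      then obtain a b where ab: "a\<in>S" "b\<in>S" "a\<noteq>0" "b\<noteq>0" "x = a+b"
        using less.prems False unfolding minimal_generators_def by blast
      then have "a < x" "b < x" by auto
      then obtain i1 j1 i2 j2 where "a = i1*p + j1*q" "b = i2*p + j2*q"
        using less.IH ab by meson
      then have "x = (i1+i2)*p + (j1+j2)*q" using ab by (simp add: algebra_simps)
      then show ?thesis by blast
    qed
  qed
qed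

theorem mainTheorem14:
  fixes S :: "nat set"
  assumes "numerical_semigroup S"
    and "reflective S"
    and "genus S \<ge> 1"
  shows "real (embedding_dimension S) \<ge>
           (real (frobenius S) + 1) / (real (frobenius S) + 1 - real (genus S))"
proof -
  define g where "g = genus S"
  define F where "F = frobenius S"
  define G where "G = gaps S"
  define E where "E = minimal_generators S"
  define e where "e = embedding_dimension S"
  have ns: "numerical_semigroup S" by fact
  have S0: "0 \<in> S" and Sadd: "\<And>x y. x\<in>S \<Longrightarrow> y\<in>S \<Longrightarrow> x+y\<in>S" and finG: "finite G"
    using assms(1) unfolding numerical_semigroup_def G_def gaps_def by auto
  have rfl: "\<And>z. z < g \<Longrightarrow> (z\<in>S) \<noteq> (z+g\<in>S)" using assms(2) unfolding reflective_def g_def by auto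
  have G_iff: "\<And>x. x \<in> G \<longleftrightarrow> x \<notin> S" by (simp add: gaps_def G_def)
  have gG: "card G = g" by (simp add: g_def genus_def G_def)
  have g1: "g \<ge> 1" using assms(3) g_def by simp
  define f where "f z = (if z \<in> S then z+g else z)" for z
  have fG: "f ` {..<g} \<subseteq> G"
  proof
    fix y assume "y \<in> f ` {..<g}"
    then obtain z where z: "z < g" "y = f z" by auto
    show "y \<in> G" using rfl[OF z(1)] z G_iff unfolding f_def by (auto split: if_splits)
  qed
  have inj: "inj_on f {..<g}"
  proof
    fix x y assume "x \<in> {..<g}" "y \<in> {..<g}" "f x = f y"
    then show "x = y" unfolding f_def by (simp split: if_splits)
  qed
  have "card (f ` {..<g}) = g" by (simp add: card_image inj)
  then have fimg: "f ` {..<g} = G" using card_subset_eq[OF finG fG] gG by simp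
  have Gbound: "\<And>x. x\<in>G \<Longrightarrow> x < 2*g"
  proof -
    fix x assume "x \<in> G"
    then obtain z where "z < g" "x = f z" using fimg by auto
    then show "x < 2*g" unfolding f_def by auto
  qed
  have Gne: "G \<noteq> {}" using gG g1 by auto
  have FG: "F \<in> G" using Max_in[OF finG Gne] by (simp add: F_def frobenius_def G_def)
  have Fmax: "\<And>x. x\<in>G \<Longrightarrow> x \<le> F" using Max_ge[OF finG] by (simp add: F_def frobenius_def G_def)
  have gGm: "g \<in> G" using rfl[of 0] S0 g1 G_iff by auto
  have gF: "g \<le> F" using Fmax[OF gGm] .
  have F2g: "F < 2*g" using Gbound[OF FG] .
  define M where "M = F - g"
  have FM: "F = g + M" using gF M_def by simp
  have Mg: "M < g" using F2g FM by simp
  have "M + g \<notin> S" using FG G_iff FM by (simp add: add.commute)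
  then have MS: "M \<in> S" using rfl[OF Mg] by blast
  have gapmid: "\<And>y. M < y \<Longrightarrow> y < g \<Longrightarrow> y \<notin> S"
  proof
    fix y assume y: "M < y" "y < g" "y \<in> S"
    then have "y + g \<in> G" using rfl[OF y(2)] G_iff by auto
    then have "y + g \<le> F" using Fmax by blast
    then show False using y FM by simp
  qed
  have big: "\<And>x. F < x \<Longrightarrow> x \<in> S"
  proof (rule ccontr)
    fix x assume "F < x" "x \<notin> S"
    then show False using Fmax[of x] G_iff[of x] by simp
  qed
  have Efin: "finite E"
  proof -
    have "E \<subseteq> {..2*F+1}"
    proof
      fix x assume xE: "x \<in> E"
      show "x \<in> {..2*F+1}"
      proof (rule ccontr)
        assume "x \<notin> {..2*F+1}"
        then have x: "x > 2*F+1" by simp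
        obtain b where hb: "x = (F+1) + b" using x le_Suc_ex[of "F+1" x] by auto
        have h1: "F+1 \<in> S" "b \<in> S" "b \<noteq> 0" "F+1 \<noteq> 0" using big x hb by auto
        have "\<exists>a\<in>S. \<exists>b\<in>S. a \<noteq> 0 \<and> b \<noteq> 0 \<and> x = a + b"
          by (rule bexI[where x="F+1"], rule bexI[where x=b]) (use h1 hb in simp_all)
        then show False using xE unfolding E_def minimal_generators_def by blast
      qed
    qed
    then show ?thesis using finite_subset finite_atMost by blast
  qed
  have ESsub: "E \<subseteq> S" "0 \<notin> E" unfolding E_def minimal_generators_def by auto
  have ecard: "e = card E" by (simp add: e_def E_def embedding_dimension_def)
  have key: "F + 1 \<le> e*(M+1)"
  proof (cases "M = 0")
    case True
    have "{F+1..2*F+1} \<subseteq> E"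
    proof
      fix x assume x: "x \<in> {F+1..2*F+1}"
      have xS: "x \<in> S" using big x by auto
      have lo: "\<And>a. a \<in> S \<Longrightarrow> a \<noteq> 0 \<Longrightarrow> a > F"
      proof (rule ccontr)
        fix a assume a: "a \<in> S" "a \<noteq> 0" "\<not> a > F"
        show False
        proof (cases "a < g")
          case True then show ?thesis using gapmid[of a] a \<open>M = 0\<close> by auto
        next
          case False then have "a = g" using a FM \<open>M=0\<close> by simp
          then show ?thesis using gGm G_iff a by auto
        qed
      qed
      have "\<not> (\<exists>a\<in>S. \<exists>b\<in>S. a \<noteq> 0 \<and> b \<noteq> 0 \<and> x = a + b)"
      proof
        assume "\<exists>a\<in>S. \<exists>b\<in>S. a \<noteq> 0 \<and> b \<noteq> 0 \<and> x = a + b"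
        then obtain a b where "a\<in>S" "b\<in>S" "a\<noteq>0" "b\<noteq>0" "x = a+b" by blast
        then show False using lo[of a] lo[of b] x by auto
      qed
      then show "x \<in> E" using xS x unfolding E_def minimal_generators_def by auto
    qed
    then have "card {F+1..2*F+1} \<le> card E" using Efin card_mono by blast
    then have "F + 1 \<le> e" using ecard by simp
    then show ?thesis using True by simp
  next
    case Mpos: False
    have M2: "g \<le> 2*M"
    proof (rule ccontr)
      assume "\<not> g \<le> 2*M"
      then have "M + M < g" by simp
      moreover have "M + M \<in> S" using Sadd MS by blast
      ultimately show False using gapmid[of "M+M"] Mpos by simp
    qed
    have F1S: "F+1 \<in> S" "F+2 \<in> S" using big by auto
    have small: "card E \<le> 1 \<Longrightarrow> False"
    proof -
      assume c: "card E \<le> 1"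
      then have "card E = 0 \<or> card E = 1" by auto
      then show False
      proof
        assume "card E = 0"
        then have "E = {}" using Efin by simp
        then have sub0: "minimal_generators S \<subseteq> {0,0}" using E_def by simp
        have "\<exists>i j. F+1 = i*0 + j*(0::nat)" using gen[OF ns sub0 F1S(1)] .
        then show False by simp
      next
        assume "card E = 1"
        then obtain p where Ep: "E = {p}" by (auto simp: card_1_singleton_iff)
        have pS: "p \<in> S" "p \<noteq> 0" using ESsub(1) ESsub(2) Ep by auto
        have sub: "minimal_generators S \<subseteq> {p,p}" using Ep E_def by simp
        obtain i j where "F+1 = i*p + j*p" using gen[OF ns sub F1S(1)] by blast
        then have d1: "p dvd F+1" by (simp add: add_mult_distrib[symmetric])
        obtain i j where "F+2 = i*p + j*p" using gen[OF ns sub F1S(2)] by blast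
        then have d2: "p dvd F+2" by (simp add: add_mult_distrib[symmetric])
        have "p dvd (F+2) - (F+1)" using dvd_diff_nat[OF d2 d1] .
        then have "p = 1" by simp
        then have "F \<in> S" using mult_in[OF ns pS(1), of F] by simp
        then show False using FG G_iff by simp
      qed
    qed
    have two: "card E = 2 \<Longrightarrow> M + 1 = g"
    proof (rule ccontr)
      assume c2: "card E = 2" and ne: "M + 1 \<noteq> g"
      then have Mg1: "M + 1 < g" using Mg by simp
      obtain p q where Epq: "E = {p,q}" "p \<noteq> q" using c2 by (auto simp: card_2_iff)
      have pS: "p \<in> S" "p \<noteq> 0" "q \<in> S" "q \<noteq> 0" using ESsub(1) ESsub(2) Epq(1) by auto
      have sub: "minimal_generators S \<subseteq> {p,q}" using Epq(1) by (simp add: E_def)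
      have RS: "\<And>i j. i*p + j*q \<in> S"
      proof -
        fix i j
        show "i*p + j*q \<in> S" using Sadd[OF mult_in[OF ns pS(1)] mult_in[OF ns pS(3)]] .
      qed
      have gd: "\<And>x. x \<in> S \<Longrightarrow> gcd p q dvd x"
      proof -
        fix x assume xS: "x \<in> S"
        obtain i j where "x = i*p + j*q" using gen[OF ns sub xS] by blast
        then show "gcd p q dvd x" by simp
      qed
      have "gcd p q dvd (F+2) - (F+1)" using dvd_diff_nat[OF gd[OF F1S(2)] gd[OF F1S(1)]] .
      then have "gcd p q = 1" by simp
      then have cop: "coprime p q" by (simp add: coprime_iff_gcd_eq_1)
      have pp: "p > 0" "q > 0" using pS by auto
      have notR: "\<And>x. x \<notin> S \<Longrightarrow> \<exists>i j. x + i*p + j*q + p + q = p*q"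
      proof -
        fix x assume xS: "x \<notin> S"
        have "\<not> (\<exists>i j. x = i*p + j*q)"
        proof (rule notI, elim exE)
          fix i j assume "x = i*p + j*q"
          then show False using RS[of i j] xS by simp
        qed
        then show "\<exists>i j. x + i*p + j*q + p + q = p*q" using rep[OF cop pp, of x] by blast
      qed
      have FnS: "F \<notin> S" using FG G_iff by simp
      obtain i j where ij: "F + i*p + j*q + p + q = p*q" using notR[OF FnS] by blast
      have r0: "i*p + j*q = 0"
      proof (rule ccontr)
        assume "i*p + j*q \<noteq> 0"
        then have FS: "F + (i*p + j*q) \<in> S" using big by simp
        obtain i' j' where "F + (i*p + j*q) = i'*p + j'*q" using gen[OF ns sub FS] by blast
        then have "i'*p + j'*q + p + q = p*q" using ij by simp
        then show False using norep[OF cop pp, of i' j'] by simp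
      qed
      have "g - 1 \<notin> S" using gapmid[of "g-1"] Mg1 by simp
      then obtain i2 j2 where ij2: "(g-1) + i2*p + j2*q + p + q = p*q" using notR by blast
      have "i2*p + j2*q = M + 1" using ij ij2 r0 FM g1 by linarith
      then have "M + 1 \<in> S" using RS[of i2 j2] by simp
      then show False using gapmid[of "M+1"] Mg1 by simp
    qed
    have e2: "e \<ge> 2"
    proof (rule ccontr)
      assume "\<not> e \<ge> 2" then have "card E \<le> 1" using ecard by simp
      then show False using small by blast
    qed
    show ?thesis
    proof (cases "M + 1 = g")
      case True
      have "2*(M+1) \<le> e*(M+1)" using e2 mult_le_mono1 by blast
      moreover have "F + 1 = 2*(M+1)" using True FM by simp
      ultimately show ?thesis by simp
    next
      case False
      have "e \<ge> 3"
      proof (rule ccontr)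
        assume "\<not> e \<ge> 3" then have "card E = 2" using e2 ecard by simp
        then show False using two False by blast
      qed
      then have "3*(M+1) \<le> e*(M+1)" using mult_le_mono1 by blast
      moreover have "F + 1 \<le> 3*(M+1)" using M2 FM by simp
      ultimately show ?thesis by (rule_tac le_trans) auto
    qed
  qed
  have den: "real F + 1 - real g = real (M+1)" using FM by simp
  have "(real F + 1) / real (M+1) \<le> real e"
  proof -
    have "real (F+1) \<le> real (e*(M+1))" using key of_nat_le_iff by blast
    then have h: "real F + 1 \<le> real e * real (M+1)" by (simp add: algebra_simps)
    have pos: "real (M+1) > 0" by simp
    show ?thesis using h by (simp only: pos_divide_le_eq[OF pos])
  qed
  then have "(real F + 1) / (real F + 1 - real g) \<le> real e" unfolding den .
  then show ?thesis by (simp only: F_def g_def e_def)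
qed

end
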